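(* Under the setting described in the context, let $\{(x^j,y^j,z^j)\}_{j\ge0}$ be generated by the algorithm described there, and assume that $\sum_{j=1}^\infty\|z^{j+1}-z^j\|_2^2<\infty$ and that $\{z^j\}$ is bounded. Then $\{(x^j,y^j)\}$ is bounded, and every limit point $(\bar x,\bar y)$ of $\{(x^j,y^j)\}$ is a stationary point of the problem, i.e., there exists $\hat z\in\mathbb{R}^L$ with $$0\in\nabla f(\bar x)+\partial\mathcal{I}_{\mathcal{X}}(\bar x)-R^\top\hat z,\qquad 0\in\partial g(\bar y)+\partial\mathcal{I}_{\mathcal{Y}}(\bar y)+\hat z,\qquad \bar y=R\bar x .$$
   Context: Let $K,L\ge1$, $P_1,\dots,P_K\ge1$, $P=\sum_kP_k$. Let $R=(R_1,\dots,R_K)\in\{0,1\}^{L\times P}$ with $R_k\in\{0,1\}^{L\times P_k}$, every column of $R$ having at least one nonzero entry. Let $c\in\mathbb{R}^L$ with $c_l>0$, integers $1\le w_k\le P_k$, and constants $\alpha,\beta>0$, $s_k>0$. Vectors $x\in\mathbb{R}^P$ are partitioned as $x=(x_1;\dots;x_K)$ with $x_k\in\mathbb{R}^{P_k}$. Let $U_k(u)=\beta\log u-s_k/u$ for $u>0$. For $x\ge0$ define $f(x)=-\sum_{k}U_k(\|x_k\|_1)$ if $\|x_k\|_1>0$ for all $k$, and $f(x)=+\infty$ otherwise; let $g(y)=\alpha\max_l y_l/c_l$. Let $\mathcal{X}=\{x\in\mathbb{R}^P: x\ge0,\ \|x_k\|_0\le w_k\ \forall k\}$ and $\mathcal{Y}=\{y\in\mathbb{R}^L:0\le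 y\le c\}$, and let $\mathcal{I}_S$ denote the indicator function of a set $S$ ($0$ on $S$, $+\infty$ off $S$). The problem is $\min_{x,y} f(x)+g(y)+\mathcal{I}_{\mathcal{X}}(x)+\mathcal{I}_{\mathcal{Y}}(y)$ s.t. $y=Rx$, with augmented Lagrangian $$L_\rho(x,y;z)=f(x)+g(y)+\mathcal{I}_{\mathcal{X}}(x)+\mathcal{I}_{\mathcal{Y}}(y)+z^\top(y-Rx)+\frac{\rho}{2}\|y-Rx\|_2^2 .$$ Algorithm: fix $\rho>0$ and $\mu>\rho\|R\|_2^2$ ($\|R\|_2$ the spectral norm), and an initial point $(x^0,y^0,z^0)$ with $x^0\in\mathcal{X}$, $\|x^0_k\|_1>0$ for all $k$, $y^0\in\mathcal{Y}$. For $j\ge0$: $q^j=R^\top(y^j-Rx^j+z^j/\rho)$, $\nu^j=x^j+(\rho/\mu)q^j$; $x^{j+1}\in\arg\min_{x\in\mathcal{X}} f(x)+\frac{\mu}{2}\|x-\nu^j\|_2^2$; $y^{j+1}\in\arg\min_{y\in\mathcal{Y}} g(y)+\frac{\rho}{2}\|y-Rx^{j+1}+z^j/\rho\|_2^2$; $z^{j+1}=z^j+\rho(y^{j+1}-Rx^{j+1})$. Here $\partial$ denotes the limiting (Mordukhovich) subdifferential, and $\nabla f$ the gradient of $f$ at points where all blocks $x_k$ have $\|x_k\|_1>0$. *)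

theory Defs
  imports "HOL-Analysis.Analysis" "HOL-Library.Extended_Real"
begin

text \<open>Vectors in R^P are real^'p; the block partition x = (x_1;...;x_K) is encoded by
  a map blk :: 'p => 'k assigning each coordinate to its block.  R^L is real^'l.\<close>

definition blocknorm :: "('p::finite \<Rightarrow> 'k) \<Rightarrow> real^'p \<Rightarrow> 'k \<Rightarrow> real" where
  "blocknorm blk x k = (\<Sum>i\<in>{i. blk i = k}. \<bar>x$i\<bar>)"

definition blockl0 :: "('p::finite \<Rightarrow> 'k) \<Rightarrow> real^'p \<Rightarrow> 'k \<Rightarrow> nat" where
  "blockl0 blk x k = card {i. blk i = k \<and> x$i \<noteq> 0}"

definition Uk :: "real \<Rightarrow> real \<Rightarrow> real \<Rightarrow> real" where
  "Uk beta s u = beta * ln u - s / u"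

definition fobj :: "('p::finite \<Rightarrow> 'k::finite) \<Rightarrow> real \<Rightarrow> ('k \<Rightarrow> real) \<Rightarrow> real^'p \<Rightarrow> ereal" where
  "fobj blk beta s x =
     (if (\<forall>i. 0 \<le> x$i) \<and> (\<forall>k. 0 < blocknorm blk x k)
      then ereal (- (\<Sum>k\<in>UNIV. Uk beta (s k) (blocknorm blk x k)))
      else \<infinity>)"

text \<open>Gradient of f at a point where all blocks have positive l1-norm (x >= 0):
  d/dx_i [ - U_k(sum_{i' in block k} x_i') ] = -(beta/u + s_k/u^2), u = ||x_k||_1.\<close>
definition fgrad :: "('p::finite \<Rightarrow> 'k::finite) \<Rightarrow> real \<Rightarrow> ('k \<Rightarrow> real) \<Rightarrow> real^'p \<Rightarrow> real^'p" where
  "fgrad blk beta s x = (\<chi> i. - (beta / blocknorm blk x (blk i)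
                                  + s (blk i) / (blocknorm blk x (blk i))^2))"

definition gobj :: "real \<Rightarrow> real^'l::finite \<Rightarrow> real^'l \<Rightarrow> real" where
  "gobj alpha c y = alpha * Max (range (\<lambda>l. y$l / c$l))"

definition Xset :: "('p::finite \<Rightarrow> 'k) \<Rightarrow> ('k \<Rightarrow> nat) \<Rightarrow> (real^'p) set" where
  "Xset blk w = {x. (\<forall>i. 0 \<le> x$i) \<and> (\<forall>k. blockl0 blk x k \<le> w k)}"

definition Yset :: "real^'l::finite \<Rightarrow> (real^'l) set" where
  "Yset c = {y. \<forall>l. 0 \<le> y$l \<and> y$l \<le> c$l}"

definition indic :: "'a set \<Rightarrow> 'a \<Rightarrow> ereal" where
  "indic S x = (if x \<in> S then 0 else \<infinity>)"

definition frechet_subdiff :: "('a::real_inner \<Rightarrow> ereal) \<Rightarrow> 'a \<Rightarrow> 'a set" where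
  "frechet_subdiff phi x = {v. phi x \<noteq> \<infinity> \<and> phi x \<noteq> -\<infinity> \<and>
     (\<forall>e>0. \<exists>d>0. \<forall>u. norm (u - x) < d \<longrightarrow>
        phi u \<ge> phi x + ereal (inner v (u - x) - e * norm (u - x)))}"

definition limiting_subdiff :: "('a::real_inner \<Rightarrow> ereal) \<Rightarrow> 'a \<Rightarrow> 'a set" where
  "limiting_subdiff phi x = {v. phi x \<noteq> \<infinity> \<and> phi x \<noteq> -\<infinity> \<and>
     (\<exists>xs vs. xs \<longlonglongrightarrow> x \<and> (\<lambda>n. phi (xs n)) \<longlonglongrightarrow> phi x \<and>
        (\<forall>n. vs n \<in> frechet_subdiff phi (xs n)) \<and> vs \<longlonglongrightarrow> v)}"

definition is_argmin_on :: "('a \<Rightarrow> 'b::linorder) \<Rightarrow> 'a set \<Rightarrow> 'a \<Rightarrow> bool" where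
  "is_argmin_on h S x \<longleftrightarrow> x \<in> S \<and> (\<forall>x'\<in>S. h x \<le> h x')"

end

theory Submission
  imports Defs
begin


lemma inner_transpose: "inner (transpose (R::real^'n::finite^'m::finite) *v a) h = inner a (R *v h)"
  by (simp add: transpose_matrix_vector dot_lmul_matrix)

definition Mx :: "real^'l::finite \<Rightarrow> real^'l \<Rightarrow> real" where
  "Mx c y = Max (range (\<lambda>l. y$l / c$l))"

lemma gobj_Mx: "gobj alpha c y = alpha * Mx c y" by (simp add: gobj_def Mx_def)

lemma Mx_ge: "y$l / c$l \<le> Mx c y"
  unfolding Mx_def by (rule Max_ge) auto

lemma Mx_attain: "\<exists>l. Mx c y = y$l / c$l"
proof -
  have "Max (range (\<lambda>l. y$l / c$l)) \<in> range (\<lambda>l. y$l / c$l)" by (rule Max_in) auto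
  then obtain l where "Max (range (\<lambda>l. y$l / c$l)) = y$l / c$l" by blast
  thus ?thesis unfolding Mx_def by blast
qed

lemma Mx_le: "(\<And>l. y$l / c$l \<le> t) \<Longrightarrow> Mx c y \<le> t"
  unfolding Mx_def by (subst Max_le_iff) auto

lemma Mx_lip:
  fixes c u v :: "real^'l::finite"
  assumes cpos: "\<forall>l. 0 < c$l"
  shows "\<bar>Mx c u - Mx c v\<bar> \<le> (\<Sum>l\<in>UNIV. 1 / c$l) * norm (u - v)"
proof -
  let ?K = "(\<Sum>l\<in>UNIV. 1 / c$l)"
  have key: "Mx c a \<le> Mx c b + ?K * norm (a - b)" for a b :: "real^'l"
  proof (rule Mx_le)
    fix l
    have cl: "c$l > 0" using cpos by auto
    have "a$l / c$l = b$l / c$l + (a$l - b$l) / c$l" using cl by (simp add: field_simps)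
    also have "(a$l - b$l) / c$l \<le> norm (a - b) * (1 / c$l)"
    proof -
      have "\<bar>(a - b)$l\<bar> \<le> norm (a - b)" by (rule component_le_norm_cart)
      hence "a$l - b$l \<le> norm (a - b)" by simp
      thus ?thesis using cl by (simp add: divide_right_mono)
    qed
    also have "norm (a - b) * (1 / c$l) \<le> norm (a - b) * ?K"
      by (rule mult_left_mono, rule member_le_sum) (use cpos in \<open>auto simp: less_imp_le\<close>)
    finally show "a$l / c$l \<le> Mx c b + ?K * norm (a - b)" using Mx_ge[of b l c] by (simp add: mult.commute)
  qed
  show ?thesis using key[of u v] key[of v u] by (simp add: norm_minus_commute abs_le_iff)
qed

lemma Mx_convex:
  assumes "0 \<le> t" "t \<le> 1"
  shows "Mx c ((1 - t) *\<^sub>R a + t *\<^sub>R b) \<le> (1 - t) * Mx c a + t * Mx c b"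
proof (rule Mx_le)
  fix l
  have "((1 - t) *\<^sub>R a + t *\<^sub>R b)$l / c$l = (1 - t) * (a$l / c$l) + t * (b$l / c$l)"
    by (simp add: add_divide_distrib)
  also have "\<dots> \<le> (1 - t) * Mx c a + t * Mx c b"
    by (intro add_mono mult_left_mono Mx_ge) (use assms in auto)
  finally show "((1 - t) *\<^sub>R a + t *\<^sub>R b)$l / c$l \<le> (1 - t) * Mx c a + t * Mx c b" .
qed

lemma limiting_of_frechet:
  assumes "v \<in> frechet_subdiff phi x"
  shows "v \<in> limiting_subdiff phi x"
proof -
  have "phi x \<noteq> \<infinity> \<and> phi x \<noteq> -\<infinity>" using assms unfolding frechet_subdiff_def by auto
  moreover have "(\<lambda>n. x) \<longlonglongrightarrow> x \<and> (\<lambda>n. phi ((\<lambda>n. x) n)) \<longlonglongrightarrow> phi x \<and>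
        (\<forall>n. (\<lambda>n. v) n \<in> frechet_subdiff phi ((\<lambda>n. x) n)) \<and> (\<lambda>n. v) \<longlonglongrightarrow> v"
    using assms by simp
  ultimately show ?thesis unfolding limiting_subdiff_def mem_Collect_eq
    apply (intro conjI)
      apply blast
     apply blast
    apply (rule exI[where x="\<lambda>n. x"], rule exI[where x="\<lambda>n. v"])
    by simp
qed

lemma frechet_indic:
  assumes "x \<in> S" "d > 0" "\<And>u. u \<in> S \<Longrightarrow> norm (u - x) < d \<Longrightarrow> inner v (u - x) \<le> 0"
  shows "v \<in> frechet_subdiff (indic S) x"
  unfolding frechet_subdiff_def
proof (intro CollectI conjI allI impI)
  show "indic S x \<noteq> \<infinity>" "indic S x \<noteq> -\<infinity>" using assms(1) by (auto simp: indic_def)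
  fix e :: real assume e: "e > 0"
  show "\<exists>d>0. \<forall>u. norm (u - x) < d \<longrightarrow> indic S x + ereal (inner v (u - x) - e * norm (u - x)) \<le> indic S u"
  proof (intro exI[of _ d] conjI allI impI)
    fix u assume u: "norm (u - x) < d"
    show "indic S x + ereal (inner v (u - x) - e * norm (u - x)) \<le> indic S u"
    proof (cases "u \<in> S")
      case True
      with assms(3) u have "inner v (u - x) \<le> 0" by auto
      moreover have "0 \<le> e * norm (u - x)" using e by simp
      ultimately show ?thesis using True assms(1) by (simp add: indic_def)
    qed (simp add: indic_def)
  qed (rule assms(2))
qed



lemma kkt_from_lam:
  fixes c yb zh :: "real^'l::finite" and lam :: "'l \<Rightarrow> real"
  assumes cpos: "\<forall>l. 0 < c$l" and alpha: "alpha > 0" and yb: "yb \<in> Yset c"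
    and lam0: "\<forall>l. 0 \<le> lam l" and lam1: "sum lam UNIV = 1"
    and lamT: "\<forall>l. lam l > 0 \<longrightarrow> yb$l / c$l = Mx c yb"
    and bcond: "\<forall>l u. 0 \<le> u \<and> u \<le> c$l \<longrightarrow> (- zh$l - alpha * lam l / c$l) * (u - yb$l) \<le> 0"
  shows "\<exists>a b. a \<in> frechet_subdiff (\<lambda>v. ereal (gobj alpha c v)) yb \<and>
              b \<in> frechet_subdiff (indic (Yset c)) yb \<and> a + b + zh = 0"
proof -
  define a :: "real^'l" where "a = (\<chi> l. alpha * lam l / c$l)"
  define b where "b = - zh - a"
  have ga: "gobj alpha c yb + inner a (u - yb) \<le> gobj alpha c u" for u
  proof -
    have "inner a (u - yb) = alpha * (\<Sum>l\<in>UNIV. lam l * (u$l / c$l - yb$l / c$l))"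
      unfolding a_def inner_vec_def sum_distrib_left by (intro sum.cong refl) (simp add: diff_divide_distrib[symmetric] mult.assoc)
    also have "\<dots> \<le> alpha * (\<Sum>l\<in>UNIV. lam l * (Mx c u - Mx c yb))"
    proof (rule mult_left_mono, rule sum_mono)
      fix l
      show "lam l * (u$l / c$l - yb$l / c$l) \<le> lam l * (Mx c u - Mx c yb)"
      proof (cases "lam l > 0")
        case True
        with lamT have "yb$l / c$l = Mx c yb" by auto
        with Mx_ge[of u l c] True show ?thesis by (intro mult_left_mono) auto
      next
        case False with lam0 have "lam l = 0" by (metis less_eq_real_def)
        thus ?thesis by simp
      qed
    qed (use alpha in \<open>auto\<close>)
    also have "\<dots> = alpha * (Mx c u - Mx c yb)" by (simp add: sum_distrib_right[symmetric] lam1)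
    finally show ?thesis by (simp add: gobj_Mx algebra_simps)
  qed
  have "a \<in> frechet_subdiff (\<lambda>v. ereal (gobj alpha c v)) yb"
    unfolding frechet_subdiff_def
  proof (intro CollectI conjI allI impI)
    fix e :: real assume e: "e > 0"
    show "\<exists>d>0. \<forall>u. norm (u - yb) < d \<longrightarrow> ereal (gobj alpha c yb) + ereal (inner a (u - yb) - e * norm (u - yb)) \<le> ereal (gobj alpha c u)"
    proof (intro exI[of _ 1] conjI allI impI)
      fix u :: "real^'l"
      have "0 \<le> e * norm (u - yb)" using e by simp
      thus "ereal (gobj alpha c yb) + ereal (inner a (u - yb) - e * norm (u - yb)) \<le> ereal (gobj alpha c u)"
        using ga[of u] by simp
    qed simp
  qed simp_all
  moreover have "b \<in> frechet_subdiff (indic (Yset c)) yb"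
  proof (rule frechet_indic[OF yb, of 1])
    fix u assume u: "u \<in> Yset c"
    have "inner b (u - yb) = (\<Sum>l\<in>UNIV. (- zh$l - alpha * lam l / c$l) * (u$l - yb$l))"
      unfolding b_def a_def inner_vec_def by (simp add: algebra_simps)
    also have "\<dots> \<le> 0" by (rule sum_nonpos) (use bcond u in \<open>auto simp: Yset_def\<close>)
    finally show "inner b (u - yb) \<le> 0" .
  qed simp
  moreover have "a + b + zh = 0" by (simp add: b_def)
  ultimately show ?thesis by blast
qed



lemma y_kkt:
  fixes c yb zh :: "real^'l::finite"
  assumes cpos: "\<forall>l. 0 < c$l" and alpha: "alpha > 0" and yb: "yb \<in> Yset c"
    and opt: "\<forall>v\<in>Yset c. gobj alpha c yb + inner zh yb \<le> gobj alpha c v + inner zh v"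
  shows "\<exists>a b. a \<in> frechet_subdiff (\<lambda>v. ereal (gobj alpha c v)) yb \<and>
              b \<in> frechet_subdiff (indic (Yset c)) yb \<and> a + b + zh = 0"
proof -
  define m where "m = Mx c yb"
  have cl: "0 < c$l" for l using cpos by auto
  have cle: "0 \<le> c$l" for l using cl less_imp_le by blast
  have ybl: "0 \<le> yb$l" "yb$l \<le> c$l" for l using yb by (auto simp: Yset_def)
  have ratio_le: "yb$l / c$l \<le> m" for l unfolding m_def by (rule Mx_ge)
  have ybm: "yb$l \<le> m * c$l" for l using ratio_le[of l] cl[of l] by (simp add: pos_divide_le_eq)
  have m0: "0 \<le> m" using ratio_le[of undefined] ybl[of undefined] cl[of undefined]
    by (meson divide_nonneg_pos order_trans)
  have m1: "m \<le> 1" unfolding m_def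
    by (rule Mx_le) (use ybl cl in \<open>simp add: divide_le_eq_1\<close>)
  have test: "0 \<le> inner zh (v - yb)" if v: "v \<in> Yset c" "Mx c v \<le> m" for v
  proof -
    have "alpha * m + inner zh yb \<le> alpha * Mx c v + inner zh v"
      using opt v(1) by (simp add: gobj_Mx m_def)
    also have "\<dots> \<le> alpha * m + inner zh v" using v(2) alpha by simp
    finally show ?thesis by (simp add: inner_diff_right)
  qed
  define upd where "upd l t = (\<chi> i. if i = l then t else yb$i)" for l t
  have upd_inner: "inner zh (upd l t - yb) = zh$l * (t - yb$l)" for l t
  proof -
    have "inner zh (upd l t - yb) = (\<Sum>i\<in>UNIV. if i = l then zh$l * (t - yb$l) else 0)"
      unfolding inner_vec_def by (intro sum.cong refl) (auto simp: upd_def)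
    thus ?thesis by simp
  qed
  have upd_Y: "upd l t \<in> Yset c" if "0 \<le> t" "t \<le> c$l" for l t
    using that ybl by (auto simp: Yset_def upd_def)
  have upd_Mx: "Mx c (upd l t) \<le> m" if "t / c$l \<le> m" for l t
    by (rule Mx_le) (use that ratio_le in \<open>auto simp: upd_def\<close>)
  have F1: "0 \<le> zh$l" if "yb$l < m * c$l" for l
  proof -
    have "m * c$l \<le> c$l" using m1 cl[of l] by simp
    moreover have "0 \<le> m * c$l" using m0 cl[of l] by simp
    moreover have "(m * c$l) / c$l \<le> m" using cl[of l] by simp
    ultimately have "0 \<le> zh$l * (m * c$l - yb$l)"
      using test[OF upd_Y upd_Mx] upd_inner by metis
    moreover have "m * c$l - yb$l > 0" using that by simp
    ultimately show ?thesis by (simp add: zero_le_mult_iff)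
  qed
  have F2: "zh$l \<le> 0" if "0 < yb$l" for l
  proof -
    have "0 \<le> zh$l * (0 - yb$l)"
      using test[OF upd_Y[of 0 l] upd_Mx[of 0 l]] upd_inner cl[of l] m0 by simp
    thus ?thesis using that by (simp add: mult_le_0_iff)
  qed
  have F3: "alpha * m + inner zh yb \<le> 0"
  proof -
    have z: "(0::real^'l) \<in> Yset c" using cle by (auto simp: Yset_def)
    have "Mx c 0 \<le> 0" by (rule Mx_le) simp
    hence g0: "gobj alpha c 0 \<le> 0" using alpha by (simp add: gobj_Mx mult_nonneg_nonpos)
    have "gobj alpha c yb + inner zh yb \<le> gobj alpha c 0 + inner zh 0" using opt z by blast
    thus ?thesis using g0 by (simp add: gobj_Mx m_def)
  qed
  show ?thesis
  proof (cases "m = 0")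
    case True
    have yb0: "yb$l = 0" for l using ybm[of l] ybl[of l] True by simp
    define v where "v = (\<chi> l. if zh$l < 0 then c$l else (0::real))"
    have vY: "v \<in> Yset c" using cle by (auto simp: Yset_def v_def)
    have "Mx c v \<le> 1" by (rule Mx_le) (use cl cle in \<open>auto simp: v_def\<close>)
    hence gv: "gobj alpha c v \<le> alpha" using alpha by (simp add: gobj_Mx)
    have gyb: "gobj alpha c yb = 0" using True by (simp add: gobj_Mx m_def)
    have iyb: "inner zh yb = 0" using yb0 by (simp add: inner_vec_def)
    have "0 \<le> alpha + inner zh v" using opt vY gv gyb iyb by fastforce
    moreover have "inner zh v = - (\<Sum>l\<in>UNIV. max 0 (- zh$l * c$l))"
    proof -
      have trm: "zh$l * v$l = - max 0 (- zh$l * c$l)" for l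
        using cl[of l] by (auto simp: v_def max_def mult_le_0_iff)
      show ?thesis unfolding inner_vec_def sum_negf[symmetric] by (simp add: trm)
    qed
    ultimately have Psum: "(\<Sum>l\<in>UNIV. max 0 (- zh$l * c$l)) \<le> alpha" by simp
    define p where "p l = max 0 (- zh$l * c$l) / alpha" for l
    define P where "P = sum p UNIV"
    have P1: "P \<le> 1" unfolding P_def p_def sum_divide_distrib[symmetric] using Psum alpha by simp
    have p0: "0 \<le> p l" for l unfolding p_def using alpha by simp
    define lam where "lam l = p l + (1 - P) / real CARD('l)" for l
    have cardpos: "real CARD('l) > 0" by simp
    show ?thesis
    proof (rule kkt_from_lam[OF cpos alpha yb, of lam])
      show "\<forall>l. 0 \<le> lam l" unfolding lam_def using p0 P1 cardpos by (simp add: add_nonneg_nonneg)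
      show "sum lam UNIV = 1" unfolding lam_def sum.distrib P_def[symmetric] using cardpos by simp
      show "\<forall>l. lam l > 0 \<longrightarrow> yb$l / c$l = Mx c yb" using yb0 True by (simp add: m_def)
      show "\<forall>l u. 0 \<le> u \<and> u \<le> c$l \<longrightarrow> (- zh$l - alpha * lam l / c$l) * (u - yb$l) \<le> 0"
      proof (intro allI impI)
        fix l u assume u: "0 \<le> u \<and> u \<le> c$l"
        have "alpha * p l / c$l \<le> alpha * lam l / c$l"
          unfolding lam_def using alpha cl[of l] P1 cardpos
          by (intro divide_right_mono mult_left_mono) auto
        moreover have "alpha * p l / c$l = max 0 (- zh$l * c$l) / c$l" using alpha by (simp add: p_def)
        moreover have "- zh$l \<le> max 0 (- zh$l * c$l) / c$l" using cl[of l]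
          by (simp add: le_divide_eq)
        ultimately have "- zh$l - alpha * lam l / c$l \<le> 0" by linarith
        thus "(- zh$l - alpha * lam l / c$l) * (u - yb$l) \<le> 0" using u yb0[of l]
          by (simp add: mult_nonpos_nonneg)
      qed
    qed
  next
    case False
    hence mpos: "m > 0" using m0 by simp
    define T where "T = {l. yb$l = m * c$l}"
    define sig where "sig = (\<Sum>l\<in>T. zh$l * c$l)"
    have zhT: "zh$l \<le> 0" if "l \<in> T" for l
      using F2[of l] that mpos cl[of l] by (simp add: T_def)
    have nT0: "0 \<le> zh$l" if "l \<notin> T" for l
    proof -
      have "yb$l < m * c$l" using ybm[of l] that by (simp add: T_def less_le)
      thus "0 \<le> zh$l" by (rule F1)
    qed
    have nT: "zh$l = 0 \<or> yb$l = 0" if "l \<notin> T" for l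
      using F2[of l] ybl[of l] nT0[OF that] by force
    have inn: "inner zh yb = m * sig"
    proof -
      have "inner zh yb = (\<Sum>l\<in>UNIV. if l \<in> T then m * (zh$l * c$l) else 0)"
        unfolding inner_vec_def by (intro sum.cong refl) (use nT in \<open>auto simp: T_def\<close>)
      also have "\<dots> = m * sig" by (simp add: sum.If_cases sig_def sum_distrib_left)
      finally show ?thesis .
    qed
    have s1: "alpha + sig \<le> 0"
    proof -
      have "m * (alpha + sig) \<le> 0" using F3 inn by (simp add: algebra_simps)
      thus ?thesis using mpos by (simp add: mult_le_0_iff)
    qed
    have s2: "alpha + sig \<ge> 0" if m1': "m < 1"
    proof -
      define v where "v = (1 / m) *\<^sub>R yb"
      have vY: "v \<in> Yset c" unfolding v_def Yset_def using ybl ybm mpos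
        by (auto simp: divide_le_eq mult.commute)
      have "Mx c v \<le> 1" unfolding v_def
        by (rule Mx_le) (use ratio_le mpos cl in \<open>auto simp: divide_le_eq\<close>)
      hence "gobj alpha c v \<le> alpha" using alpha by (simp add: gobj_Mx)
      moreover have "inner zh v = sig" unfolding v_def using inn mpos by simp
      ultimately have "alpha * m + m * sig \<le> alpha + sig"
        using opt vY inn by (force simp: gobj_Mx m_def)
      hence "0 \<le> (1 - m) * (alpha + sig)" by (simp add: algebra_simps)
      thus ?thesis using m1' by (simp add: zero_le_mult_iff)
    qed
    have signeg: "sig < 0" using s1 alpha by simp
    define lam where "lam l = (if l \<in> T then zh$l * c$l / sig else 0)" for l
    show ?thesis
    proof (rule kkt_from_lam[OF cpos alpha yb, of lam])
      show "\<forall>l. 0 \<le> lam l" unfolding lam_def using zhT signeg cl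
        by (auto intro!: divide_nonpos_neg simp: mult_nonpos_nonneg less_imp_le)
      show "sum lam UNIV = 1" unfolding lam_def using signeg
        by (simp add: sum.If_cases sig_def[symmetric] sum_divide_distrib[symmetric])
      show "\<forall>l. lam l > 0 \<longrightarrow> yb$l / c$l = Mx c yb"
        using cl by (auto simp: lam_def T_def m_def)
      show "\<forall>l u. 0 \<le> u \<and> u \<le> c$l \<longrightarrow> (- zh$l - alpha * lam l / c$l) * (u - yb$l) \<le> 0"
      proof (intro allI impI)
        fix l u assume u: "0 \<le> u \<and> u \<le> c$l"
        show "(- zh$l - alpha * lam l / c$l) * (u - yb$l) \<le> 0"
        proof (cases "l \<in> T")
          case False
          then show ?thesis using nT[OF False] nT0[OF False] u by (auto simp: lam_def)
        next
          case True
          have kap: "- zh$l - alpha * lam l / c$l = (- zh$l) * ((sig + alpha) / sig)"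
            using True cl[of l] signeg by (simp add: lam_def field_simps)
          show ?thesis
          proof (cases "m < 1")
            case True
            hence "sig + alpha = 0" using s1 s2 by simp
            thus ?thesis using kap by simp
          next
            case False
            hence "m = 1" using m1 by simp
            hence "yb$l = c$l" using True by (simp add: T_def)
            moreover have nn: "0 \<le> (- zh$l) * ((sig + alpha) / sig)"
              using zhT[OF True] s1 signeg by (intro mult_nonneg_nonneg divide_nonpos_neg) auto
            ultimately have "u - yb$l \<le> 0" using u by simp
            have "(- zh$l - alpha * lam l / c$l) * (u - yb$l) = ((- zh$l) * ((sig + alpha) / sig)) * (u - yb$l)"
              using kap by simp
            also have "\<dots> \<le> 0" by (rule mult_nonneg_nonpos[OF nn \<open>u - yb$l \<le> 0\<close>])
            finally show ?thesis .
          qed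
        qed
      qed
    qed
  qed
qed



lemma normsq_add: "(norm (a + b))^2 = (norm a)^2 + 2 * inner a b + (norm (b::'a::real_inner))^2"
  by (simp add: power2_norm_eq_inner inner_add_left inner_add_right inner_commute)

lemma deriv_Psi:
  fixes B H s :: "'k::finite \<Rightarrow> real"
  assumes "\<forall>k. B k > 0"
  shows "((\<lambda>t. (\<Sum>k\<in>UNIV. -(beta * ln (B k + t * H k) - s k / (B k + t * H k))) + mu/2 * (A0 + 2*t*A1 + t^2*A2))
     has_real_derivative ((\<Sum>k\<in>UNIV. -(beta * H k / B k + s k * H k / (B k)^2)) + mu * A1)) (at 0)"
proof -
  have B0: "B k \<noteq> 0" "B k > 0" for k using assms by (auto simp: less_imp_neq[symmetric])
  show ?thesis
  apply (rule derivative_eq_intros refl | simp add: B0)+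
  apply (simp add: power2_eq_square mult.commute)
  done
qed

lemma y_lin:
  fixes c yb zh :: "real^'l::finite"
  assumes rho: "rho > 0" and alpha: "alpha > 0" and yb: "yb \<in> Yset c"
    and opt: "\<forall>v\<in>Yset c. gobj alpha c yb + rho/2 * (norm ((1/rho) *\<^sub>R zh))^2
                 \<le> gobj alpha c v + rho/2 * (norm (v - yb + (1/rho) *\<^sub>R zh))^2"
  shows "\<forall>v\<in>Yset c. gobj alpha c yb + inner zh yb \<le> gobj alpha c v + inner zh v"
proof
  fix v assume v: "v \<in> Yset c"
  define D where "D = (norm (v - yb))^2"
  define G where "G = gobj alpha c v + inner zh (v - yb) - gobj alpha c yb"
  have D0: "0 \<le> D" unfolding D_def by simp
  have key: "0 \<le> G + rho * t * D / 2" if t: "0 < t" "t \<le> 1" for t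
  proof -
    define vt where "vt = (1 - t) *\<^sub>R yb + t *\<^sub>R v"
    have vtY: "vt \<in> Yset c"
    proof -
      have "0 \<le> vt$l \<and> vt$l \<le> c$l" for l
      proof -
        have a: "0 \<le> yb$l" "yb$l \<le> c$l" "0 \<le> v$l" "v$l \<le> c$l" using yb v by (auto simp: Yset_def)
        have "vt$l = (1 - t) * yb$l + t * v$l" by (simp add: vt_def)
        moreover have "(1 - t) * yb$l + t * v$l \<le> (1 - t) * c$l + t * c$l"
          using a t by (intro add_mono mult_left_mono) auto
        moreover have "(1 - t) * c$l + t * c$l = c$l" by (simp add: algebra_simps)
        moreover have "0 \<le> (1 - t) * yb$l + t * v$l" using a t by (intro add_nonneg_nonneg mult_nonneg_nonneg) auto
        ultimately show ?thesis by linarith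
      qed
      thus ?thesis by (simp add: Yset_def)
    qed
    have gconv: "gobj alpha c vt \<le> (1 - t) * gobj alpha c yb + t * gobj alpha c v"
    proof -
      have "Mx c vt \<le> (1 - t) * Mx c yb + t * Mx c v" unfolding vt_def using Mx_convex[of t c yb v] t by simp
      hence "alpha * Mx c vt \<le> alpha * ((1 - t) * Mx c yb + t * Mx c v)" using alpha by simp
      thus ?thesis by (simp add: gobj_Mx algebra_simps)
    qed
    have vtd: "vt - yb + (1/rho) *\<^sub>R zh = t *\<^sub>R (v - yb) + (1/rho) *\<^sub>R zh"
      by (simp add: vt_def algebra_simps)
    have nexp: "(norm (vt - yb + (1/rho) *\<^sub>R zh))^2 = t^2 * D + 2 * t * (1/rho) * inner (v - yb) zh + (norm ((1/rho) *\<^sub>R zh))^2"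
      unfolding vtd normsq_add D_def by (simp add: power_mult_distrib)
    have "gobj alpha c yb + rho/2 * (norm ((1/rho) *\<^sub>R zh))^2 \<le> gobj alpha c vt + rho/2 * (norm (vt - yb + (1/rho) *\<^sub>R zh))^2"
      using opt vtY by blast
    hence "gobj alpha c yb \<le> (1 - t) * gobj alpha c yb + t * gobj alpha c v + rho/2 * (t^2 * D) + t * inner (v - yb) zh"
    proof -
      have e: "rho/2 * (norm (vt - yb + (1/rho) *\<^sub>R zh))^2 = rho/2 * (t^2 * D) + t * inner (v - yb) zh + rho/2 * (norm ((1/rho) *\<^sub>R zh))^2"
        unfolding nexp using rho by (simp add: field_simps)
      show ?thesis using \<open>gobj alpha c yb + rho/2 * (norm ((1/rho) *\<^sub>R zh))^2 \<le> _\<close> gconv unfolding e by linarith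
    qed
    hence "0 \<le> t * (G + rho * t * D / 2)" unfolding G_def
      by (simp add: algebra_simps inner_commute power2_eq_square)
    thus ?thesis using t by (simp add: zero_le_mult_iff)
  qed
  have "0 \<le> G"
  proof (rule ccontr)
    assume "\<not> 0 \<le> G"
    hence Gn: "G < 0" by simp
    define t where "t = min 1 (- G / (rho * D + 1))"
    have dp: "rho * D + 1 > 0" using rho D0 by (smt (verit) mult_nonneg_nonneg)
    have t0: "0 < t" unfolding t_def using Gn dp by (simp add: divide_neg_pos)
    have t1: "t \<le> 1" unfolding t_def by simp
    have "t \<le> - G / (rho * D + 1)" unfolding t_def by simp
    hence "t * (rho * D + 1) \<le> (- G / (rho * D + 1)) * (rho * D + 1)"
      using dp by (intro mult_right_mono) auto
    also have "\<dots> = - G" using dp by simp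
    finally have tt: "t * (rho * D + 1) \<le> - G" .
    have "t * (rho * D + 1) = rho * t * D + t" by (simp add: algebra_simps)
    moreover have "0 \<le> rho * t * D" using rho t0 D0 by simp
    ultimately have "rho * t * D / 2 < - G" using tt t0 by linarith
    thus False using key[OF t0 t1] by simp
  qed
  thus "gobj alpha c yb + inner zh yb \<le> gobj alpha c v + inner zh v"
    unfolding G_def by (simp add: inner_diff_right)
qed



lemma x_kkt:
  fixes xb q :: "real^'p::finite" and blk :: "'p \<Rightarrow> 'k::finite" and s :: "'k \<Rightarrow> real"
  assumes mu: "mu > 0" and xb: "xb \<in> Xset blk w" and xbpos: "\<forall>k. blocknorm blk xb k > 0"
    and opt: "\<forall>u\<in>Xset blk w. (\<forall>k. blocknorm blk u k > 0) \<longrightarrow>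
       - (\<Sum>k\<in>UNIV. Uk beta (s k) (blocknorm blk xb k)) + mu/2 * (norm (xb - (xb + (1/mu) *\<^sub>R q)))^2
       \<le> - (\<Sum>k\<in>UNIV. Uk beta (s k) (blocknorm blk u k)) + mu/2 * (norm (u - (xb + (1/mu) *\<^sub>R q)))^2"
  shows "q - fgrad blk beta s xb \<in> frechet_subdiff (indic (Xset blk w)) xb"
proof -
  have xnn: "0 \<le> xb$i" for i using xb by (simp add: Xset_def)
  define Pset where "Pset = {i. 0 < xb$i}"
  define del where "del = Min (insert 1 ((\<lambda>i. xb$i) ` Pset))"
  have delpos: "0 < del" unfolding del_def by (subst Min_gr_iff) (auto simp: Pset_def)
  have delle: "del \<le> xb$i" if "0 < xb$i" for i unfolding del_def by (rule Min_le) (auto simp: Pset_def that)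
  show ?thesis
  proof (rule frechet_indic[OF xb delpos])
    fix u assume uX: "u \<in> Xset blk w" and ud: "norm (u - xb) < del"
    define v where "v = q - fgrad blk beta s xb"
    define h where "h = u - xb"
    have unn: "0 \<le> u$i" for i using uX by (simp add: Xset_def)
    have upos: "0 < u$i" if "0 < xb$i" for i
    proof -
      have "\<bar>u$i - xb$i\<bar> \<le> norm (u - xb)" using component_le_norm_cart[of "u - xb" i] by simp
      thus ?thesis using ud delle[OF that] by linarith
    qed
    define B where "B k = blocknorm blk xb k" for k
    define H where "H k = (\<Sum>i\<in>{i. blk i = k}. h$i)" for k
    have Bsum: "B k = (\<Sum>i\<in>{i. blk i = k}. xb$i)" for k unfolding B_def blocknorm_def using xnn by simp
    have Bpos: "\<forall>k. B k > 0" using xbpos B_def by simp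
    define zt where "zt t = xb + t *\<^sub>R h" for t
    have ztc: "zt t $ i = (1 - t) * xb$i + t * u$i" for t i by (simp add: zt_def h_def algebra_simps)
    have ztnn: "0 \<le> zt t $ i" if "0 \<le> t" "t \<le> 1" for t i
      unfolding ztc using that xnn unn by (intro add_nonneg_nonneg mult_nonneg_nonneg) auto
    have ztbn: "blocknorm blk (zt t) k = B k + t * H k" if "0 \<le> t" "t \<le> 1" for t k
    proof -
      have "blocknorm blk (zt t) k = (\<Sum>i\<in>{i. blk i = k}. zt t $ i)" unfolding blocknorm_def using ztnn[OF that] by simp
      also have "\<dots> = (\<Sum>i\<in>{i. blk i = k}. xb$i + t * h$i)" by (simp add: zt_def)
      also have "\<dots> = B k + t * H k" by (simp add: Bsum H_def sum.distrib sum_distrib_left)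
      finally show ?thesis .
    qed
    have ztX: "zt t \<in> Xset blk w" if "0 \<le> t" "t \<le> 1" for t
    proof -
      have "blockl0 blk (zt t) k \<le> w k" for k
      proof -
        have zero: "zt t $ i = 0" if "u$i = 0" for i
        proof -
          have "\<not> 0 < xb$i" using upos that by force
          hence "xb$i = 0" using xnn[of i] by simp
          thus ?thesis using that by (simp add: ztc)
        qed
        have sub: "{i. blk i = k \<and> zt t $ i \<noteq> 0} \<subseteq> {i. blk i = k \<and> u$i \<noteq> 0}"
          using zero by auto
        have "blockl0 blk (zt t) k \<le> blockl0 blk u k" unfolding blockl0_def by (rule card_mono[OF _ sub]) simp
        also have "\<dots> \<le> w k" using uX by (simp add: Xset_def)
        finally show ?thesis .
      qed
      thus ?thesis using ztnn[OF that] by (simp add: Xset_def)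
    qed
    have ztpos: "0 < blocknorm blk (zt t) k" if t: "0 \<le> t" "t \<le> 1" for t k
    proof -
      have "\<exists>i. blk i = k \<and> 0 < xb$i"
      proof (rule ccontr)
        assume "\<not> ?thesis"
        hence "\<forall>i\<in>{i. blk i = k}. xb$i \<le> 0" by auto
        hence "B k \<le> 0" unfolding Bsum by (intro sum_nonpos) auto
        thus False using Bpos by (simp add: not_le[symmetric])
      qed
      then obtain i where i: "blk i = k" "0 < xb$i" by blast
      have ui: "0 < u$i" using upos[OF i(2)] .
      have zi: "0 < zt t $ i"
      proof (cases "t = 1")
        case True thus ?thesis using ui by (simp add: ztc)
      next
        case False
        hence "0 < (1 - t) * xb$i" using t i by simp
        moreover have "0 \<le> t * u$i" using t ui by simp
        ultimately show ?thesis by (simp add: ztc)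
      qed
      have "\<bar>zt t $ i\<bar> \<le> blocknorm blk (zt t) k" unfolding blocknorm_def
        by (rule member_le_sum) (use i in auto)
      thus ?thesis using zi by simp
    qed
    define nb where "nb = xb + (1/mu) *\<^sub>R q"
    define a where "a = xb - nb"
    define Psi where "Psi = (\<lambda>t. (\<Sum>k\<in>UNIV. -(beta * ln (B k + t * H k) - s k / (B k + t * H k)))
        + mu/2 * ((norm a)^2 + 2*t*inner a h + t^2*(norm h)^2))"
    have Psieq: "Psi t = - (\<Sum>k\<in>UNIV. Uk beta (s k) (blocknorm blk (zt t) k)) + mu/2 * (norm (zt t - nb))^2"
      if t: "0 \<le> t" "t \<le> 1" for t
    proof -
      have "zt t - nb = a + t *\<^sub>R h" by (simp add: zt_def a_def algebra_simps)
      hence "(norm (zt t - nb))^2 = (norm a)^2 + 2*t*inner a h + t^2*(norm h)^2"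
        by (simp add: normsq_add power_mult_distrib)
      thus ?thesis unfolding Psi_def using ztbn[OF t] by (simp add: Uk_def sum_negf[symmetric])
    qed
    have zt0: "zt 0 = xb" by (simp add: zt_def)
    have Psimin: "Psi 0 \<le> Psi t" if t: "0 \<le> t" "t \<le> 1" for t
      using opt[rule_format, OF ztX[OF t] ztpos[OF t]] Psieq[OF t] Psieq[of 0] zt0
      by (simp add: nb_def)
    define D where "D = (\<Sum>k\<in>UNIV. -(beta * H k / B k + s k * H k / (B k)^2)) + mu * inner a h"
    have der: "(Psi has_real_derivative D) (at 0)"
      unfolding Psi_def D_def by (rule deriv_Psi[OF Bpos])
    have Deq: "D = - inner v h"
    proof -
      have a_eq: "a = - ((1/mu) *\<^sub>R q)" by (simp add: a_def nb_def)
      have m: "mu * inner a h = - inner q h" using mu by (simp add: a_eq)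
      define gk where "gk k = - (beta / B k + s k / (B k)^2)" for k
      have fg: "fgrad blk beta s xb $ i = gk (blk i)" for i by (simp add: fgrad_def gk_def B_def)
      have "inner (fgrad blk beta s xb) h = (\<Sum>i\<in>UNIV. gk (blk i) * h$i)"
        by (simp add: inner_vec_def fg)
      also have "\<dots> = (\<Sum>k\<in>UNIV. \<Sum>i\<in>{x. x \<in> UNIV \<and> blk x = k}. gk (blk i) * h$i)"
        by (rule sum.group[symmetric]) auto
      also have "\<dots> = (\<Sum>k\<in>UNIV. gk k * H k)"
        unfolding H_def sum_distrib_left by (intro sum.cong refl) auto
      also have "\<dots> = (\<Sum>k\<in>UNIV. -(beta * H k / B k + s k * H k / (B k)^2))"
        by (intro sum.cong refl) (simp add: gk_def algebra_simps)
      finally have "(\<Sum>k\<in>UNIV. -(beta * H k / B k + s k * H k / (B k)^2)) = inner (fgrad blk beta s xb) h" ..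
      thus ?thesis unfolding D_def m v_def by (simp add: inner_diff_left)
    qed
    have "inner v h \<le> 0"
    proof (rule ccontr)
      assume "\<not> inner v h \<le> 0"
      hence "D < 0" using Deq by simp
      from DERIV_neg_dec_right[OF der this] obtain d where d: "d > 0" "\<forall>t>0. t < d \<longrightarrow> Psi 0 > Psi (0 + t)" by blast
      define t where "t = min 1 (d / 2)"
      have t: "0 < t" "t < d" "t \<le> 1" using d unfolding t_def by auto
      hence "Psi 0 > Psi t" using d by auto
      thus False using Psimin[of t] t by simp
    qed
    thus "inner (q - fgrad blk beta s xb) (u - xb) \<le> 0" unfolding v_def h_def .
  qed
qed



lemma sq_to_zero:
  fixes f :: "nat \<Rightarrow> 'a::real_normed_vector"
  assumes "(\<lambda>n. (norm (f n))^2) \<longlonglongrightarrow> 0"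
  shows "f \<longlonglongrightarrow> 0"
proof -
  have "(\<lambda>n. sqrt ((norm (f n))^2)) \<longlonglongrightarrow> sqrt 0" by (rule tendsto_real_sqrt[OF assms])
  hence "(\<lambda>n. norm (f n)) \<longlonglongrightarrow> 0" by simp
  thus ?thesis by (simp add: tendsto_norm_zero_iff)
qed

lemma F_cont:
  fixes xs :: "nat \<Rightarrow> real^'p::finite" and blk :: "'p \<Rightarrow> 'k::finite"
  assumes "xs \<longlonglongrightarrow> xl" "\<forall>k. blocknorm blk xl k > 0"
  shows "(\<lambda>n. - (\<Sum>k\<in>UNIV. Uk beta (s k) (blocknorm blk (xs n) k))) \<longlonglongrightarrow> - (\<Sum>k\<in>UNIV. Uk beta (s k) (blocknorm blk xl k))"
proof -
  have bn: "(\<lambda>n. blocknorm blk (xs n) k) \<longlonglongrightarrow> blocknorm blk xl k" for k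
    unfolding blocknorm_def by (rule tendsto_sum, rule tendsto_rabs, rule tendsto_vec_nth, rule assms(1))
  have nz: "blocknorm blk xl k \<noteq> 0" for k using assms(2) by (metis less_irrefl)
  show ?thesis unfolding Uk_def
    apply (rule tendsto_minus, rule tendsto_sum, rule tendsto_diff)
     apply (rule tendsto_mult, rule tendsto_const, rule tendsto_ln, rule bn, rule nz)
    apply (rule tendsto_divide, rule tendsto_const, rule bn, rule nz)
    done
qed

lemma g_cont:
  fixes ys :: "nat \<Rightarrow> real^'l::finite"
  assumes cpos: "\<forall>l. 0 < c$l" and "ys \<longlonglongrightarrow> yl"
  shows "(\<lambda>n. gobj alpha c (ys n)) \<longlonglongrightarrow> gobj alpha c yl"
proof -
  let ?K = "(\<Sum>l\<in>UNIV. 1 / c$l)"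
  have "(\<lambda>n. ys n - yl) \<longlonglongrightarrow> 0" using assms(2) by (rule LIM_zero)
  moreover have bnd: "norm (gobj alpha c (ys n) - gobj alpha c yl) \<le> norm (ys n - yl) * (\<bar>alpha\<bar> * ?K)" for n
  proof -
    have "norm (gobj alpha c (ys n) - gobj alpha c yl) = \<bar>alpha\<bar> * \<bar>Mx c (ys n) - Mx c yl\<bar>"
      by (simp add: gobj_Mx abs_mult[symmetric] right_diff_distrib)
    also have "\<dots> \<le> \<bar>alpha\<bar> * (?K * norm (ys n - yl))" by (intro mult_left_mono Mx_lip cpos) simp
    finally show ?thesis by (simp add: mult_ac)
  qed
  ultimately have "(\<lambda>n. gobj alpha c (ys n) - gobj alpha c yl) \<longlonglongrightarrow> 0"
    using tendsto_0_le[where K="\<bar>alpha\<bar> * ?K" and F=sequentially and f="\<lambda>n. ys n - yl"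
        and g="\<lambda>n. gobj alpha c (ys n) - gobj alpha c yl"] always_eventually[of "\<lambda>n. norm (gobj alpha c (ys n) - gobj alpha c yl) \<le> norm (ys n - yl) * (\<bar>alpha\<bar> * ?K)"]
    by blast
  thus ?thesis by (rule LIM_zero_cancel)
qed



lemma normsq_diff: "(norm (a - b))^2 = (norm a)^2 - 2 * inner a b + (norm (b::'a::real_inner))^2"
  by (simp add: power2_norm_eq_inner inner_diff_left inner_diff_right inner_commute)

lemma descent_alg:
  fixes R :: "real^'p::finite^'l::finite" and x x' :: "real^'p" and y y' z z' :: "real^'l"
  assumes rho: "rho > 0" and mu: "mu > 0" and N: "\<And>h. norm (R *v h) \<le> N * norm h"
    and xi: "Fx' + mu/2 * (norm (x' - (x + (rho/mu) *\<^sub>R (transpose R *v (y - R *v x + (1/rho) *\<^sub>R z)))))^2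
            \<le> Fx + mu/2 * (norm (x - (x + (rho/mu) *\<^sub>R (transpose R *v (y - R *v x + (1/rho) *\<^sub>R z)))))^2"
    and yi: "gy' + rho/2 * (norm (y' - R *v x' + (1/rho) *\<^sub>R z))^2 \<le> gy + rho/2 * (norm (y - R *v x' + (1/rho) *\<^sub>R z))^2"
    and zs: "z' = z + rho *\<^sub>R (y' - R *v x')"
  shows "Fx' + gy' + inner z' (y' - R *v x') + rho/2 * (norm (y' - R *v x'))^2
     \<le> Fx + gy + inner z (y - R *v x) + rho/2 * (norm (y - R *v x))^2
        - (mu - rho * N^2)/2 * (norm (x' - x))^2 + (norm (z' - z))^2 / rho"
proof -
  define A where "A = y - R *v x + (1/rho) *\<^sub>R z"
  define h where "h = x' - x"
  define qv where "qv = transpose R *v A"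
  define w where "w = y - R *v x"
  define w' where "w' = y' - R *v x'"
  define H2 where "H2 = (norm h)^2"
  define I where "I = inner A (R *v h)"
  define RH2 where "RH2 = (norm (R *v h))^2"
  define A2 where "A2 = (norm A)^2"
  define W2 where "W2 = (norm w)^2"
  define W'2 where "W'2 = (norm w')^2"
  define Izw where "Izw = inner z w"
  define Izw' where "Izw' = inner z w'"
  define Z2 where "Z2 = (norm z)^2"
  define Q2 where "Q2 = (norm qv)^2"
  have Iq: "inner h qv = I" unfolding qv_def I_def by (subst inner_commute, rule inner_transpose)
  have e1: "(norm (x' - (x + (rho/mu) *\<^sub>R qv)))^2 = H2 - 2*(rho/mu)*I + (rho/mu)^2*Q2"
  proof -
    have eq: "x' - (x + (rho/mu) *\<^sub>R qv) = h + (- (rho/mu)) *\<^sub>R qv" by (simp add: h_def algebra_simps)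
    show ?thesis unfolding eq normsq_add H2_def Q2_def inner_scaleR_right Iq norm_scaleR power_mult_distrib
      by (simp add: power2_eq_square)
  qed
  have e2: "(norm (x - (x + (rho/mu) *\<^sub>R qv)))^2 = (rho/mu)^2*Q2"
    by (simp add: Q2_def power_mult_distrib power_divide)
  have X1: "Fx' + mu/2*H2 - rho*I \<le> Fx"
  proof -
    have "Fx' + mu/2 * (H2 - 2*(rho/mu)*I + (rho/mu)^2*Q2) \<le> Fx + mu/2 * ((rho/mu)^2*Q2)"
      using xi unfolding A_def[symmetric] qv_def[symmetric] e1 e2 .
    moreover have "mu/2 * (H2 - 2*(rho/mu)*I + (rho/mu)^2*Q2) = mu/2*H2 - rho*I + mu/2 * ((rho/mu)^2*Q2)"
      using mu by (simp add: field_simps)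
    ultimately show ?thesis by linarith
  qed
  have e3: "y - R *v x' + (1/rho) *\<^sub>R z = A + (-1) *\<^sub>R (R *v h)"
    by (simp add: A_def h_def algebra_simps)
  have E3: "(norm (y - R *v x' + (1/rho) *\<^sub>R z))^2 = A2 - 2*I + RH2"
    unfolding e3 by (simp add: normsq_diff A2_def I_def RH2_def)
  have RHb: "RH2 \<le> N^2 * H2"
  proof -
    have "norm (R *v h) \<le> N * norm h" by (rule N)
    hence "(norm (R *v h))^2 \<le> (N * norm h)^2" by (intro power_mono) auto
    thus ?thesis by (simp add: RH2_def H2_def power_mult_distrib)
  qed
  have Y2: "rho/2 * (A2 - 2*I + RH2) \<le> rho/2*A2 - rho*I + rho/2*(N^2*H2)"
  proof -
    have "rho/2 * RH2 \<le> rho/2 * (N^2*H2)" using RHb rho by simp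
    thus ?thesis by (simp add: algebra_simps)
  qed
  have E4: "rho/2 * (norm (y' - R *v x' + (1/rho) *\<^sub>R z))^2 = rho/2*W'2 + Izw' + Z2/(2*rho)"
    unfolding normsq_add W'2_def Izw'_def Z2_def w'_def using rho
    by (simp add: power_mult_distrib inner_commute field_simps power2_eq_square)
  have E5: "rho/2 * A2 = rho/2*W2 + Izw + Z2/(2*rho)"
    unfolding A2_def A_def normsq_add W2_def Izw_def Z2_def w_def[symmetric] using rho
    by (simp add: power_mult_distrib inner_commute field_simps power2_eq_square)
  have E6: "inner z' w' = Izw' + rho*W'2"
    unfolding zs w'_def[symmetric] Izw'_def W'2_def by (simp add: inner_add_left power2_norm_eq_inner)
  have E7: "(norm (z' - z))^2 / rho = rho*W'2"
    unfolding zs w'_def[symmetric] W'2_def using rho by (simp add: power_mult_distrib power2_eq_square)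
  have E8: "(mu - rho * N^2)/2 * H2 = mu/2*H2 - rho/2*(N^2*H2)" by (simp add: field_simps)
  have Y1: "gy' + rho/2 * (norm (y' - R *v x' + (1/rho) *\<^sub>R z))^2 \<le> gy + rho/2 * (A2 - 2*I + RH2)"
    using yi unfolding E3 .
  show ?thesis unfolding w_def[symmetric] w'_def[symmetric] W2_def[symmetric] W'2_def[symmetric]
      Izw_def[symmetric] h_def[symmetric] H2_def[symmetric]
    using X1 Y1 Y2 E4 E5 E6 E7 E8 by linarith
qed



theorem theorem1:
  fixes R :: "real^'p::finite^'l::finite"
    and blk :: "'p \<Rightarrow> 'k::finite"
    and c :: "real^'l" and w :: "'k \<Rightarrow> nat"
    and alpha beta rho mu :: real and s :: "'k \<Rightarrow> real"
    and x :: "nat \<Rightarrow> real^'p" and y z :: "nat \<Rightarrow> real^'l"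
  assumes R01: "\<forall>l i. R$l$i = 0 \<or> R$l$i = 1"
    and Rcol: "\<forall>i. \<exists>l. R$l$i \<noteq> 0"
    and cpos: "\<forall>l. 0 < c$l"
    and wpos: "\<forall>k. 1 \<le> w k \<and> w k \<le> card {i. blk i = k}"
    and alpha: "alpha > 0" and beta: "beta > 0" and spos: "\<forall>k. s k > 0"
    and rho: "rho > 0" and mu: "mu > rho * (onorm (\<lambda>v. R *v v))^2"
    and x0: "x 0 \<in> Xset blk w" and x0pos: "\<forall>k. blocknorm blk (x 0) k > 0"
    and y0: "y 0 \<in> Yset c"
    and xstep: "\<forall>j. is_argmin_on
        (\<lambda>u. fobj blk beta s u + ereal (mu / 2 * (norm (u -
           (x j + (rho / mu) *\<^sub>R (transpose R *v (y j - R *v x j + (1 / rho) *\<^sub>R z j)))))^2))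
        (Xset blk w) (x (Suc j))"
    and ystep: "\<forall>j. is_argmin_on
        (\<lambda>v. gobj alpha c v + rho / 2 * (norm (v - R *v x (Suc j) + (1 / rho) *\<^sub>R z j))^2)
        (Yset c) (y (Suc j))"
    and zstep: "\<forall>j. z (Suc j) = z j + rho *\<^sub>R (y (Suc j) - R *v x (Suc j))"
    and zsum: "summable (\<lambda>j. (norm (z (Suc (Suc j)) - z (Suc j)))^2)"
    and zbdd: "bounded (range z)"
  shows "bounded (range (\<lambda>j. (x j, y j))) \<and>
    (\<forall>xb yb. (\<exists>r. strict_mono r \<and> (\<lambda>n. (x (r n), y (r n))) \<longlonglongrightarrow> (xb, yb)) \<longrightarrow>
       (\<forall>k. blocknorm blk xb k > 0) \<and>
       (\<exists>zh :: real^'l.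
          (\<exists>v \<in> limiting_subdiff (indic (Xset blk w)) xb.
              fgrad blk beta s xb + v - transpose R *v zh = 0) \<and>
          (\<exists>a \<in> limiting_subdiff (\<lambda>v. ereal (gobj alpha c v)) yb.
             \<exists>b \<in> limiting_subdiff (indic (Yset c)) yb. a + b + zh = 0) \<and>
          yb = R *v xb))"


proof -
  define F where "F = (\<lambda>u::real^'p. - (\<Sum>k\<in>UNIV. Uk beta (s k) (blocknorm blk u k)))"
  define g where "g = (\<lambda>v::real^'l. gobj alpha c v)"
  define N where "N = onorm (\<lambda>v::real^'p. R *v v)"
  define nu where "nu = (\<lambda>j. x j + (rho / mu) *\<^sub>R (transpose R *v (y j - R *v x j + (1 / rho) *\<^sub>R z j)))"
  define wv where "wv = (\<lambda>j. y j - R *v x j)"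
  define Q where "Q = (\<lambda>j. F (x j) + g (y j) + inner (z j) (wv j) + rho/2 * (norm (wv j))^2)"
  define cc where "cc = (mu - rho * N^2) / 2"
  have cc: "cc > 0" using mu by (simp add: cc_def N_def)
  have mupos: "mu > 0" using mu rho by (smt (verit) mult_nonneg_nonneg zero_le_power2)
  have Nb: "\<And>h. norm (R *v h) \<le> N * norm h" unfolding N_def by (rule onorm) simp
  have cl: "0 < c$l" for l using cpos by auto
  have xin: "x j \<in> Xset blk w" for j
    using x0 xstep by (cases j) (auto simp: is_argmin_on_def)
  have yin: "y j \<in> Yset c" for j
    using y0 ystep by (cases j) (auto simp: is_argmin_on_def)
  have xnn: "0 \<le> x j $ i" for j i using xin[of j] by (simp add: Xset_def)
  have fobj_eq: "fobj blk beta s u = ereal (F u)" if "u \<in> Xset blk w" "\<forall>k. 0 < blocknorm blk u k" for u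
    using that by (simp add: fobj_def F_def Xset_def)
  have xmin: "fobj blk beta s (x (Suc j)) + ereal (mu/2 * (norm (x (Suc j) - nu j))^2)
      \<le> fobj blk beta s u + ereal (mu/2 * (norm (u - nu j))^2)" if "u \<in> Xset blk w" for j u
    using xstep that unfolding is_argmin_on_def nu_def by blast
  have pos: "\<forall>k. 0 < blocknorm blk (x j) k" for j
  proof (induction j)
    case 0 then show ?case using x0pos by simp
  next
    case (Suc j)
    have "fobj blk beta s (x (Suc j)) + ereal (mu/2 * (norm (x (Suc j) - nu j))^2)
      \<le> ereal (F (x j)) + ereal (mu/2 * (norm (x j - nu j))^2)"
      using xmin[OF xin[of j], of j] fobj_eq[OF xin Suc.IH] by simp
    hence "fobj blk beta s (x (Suc j)) \<noteq> \<infinity>" by auto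
    thus ?case by (auto simp: fobj_def split: if_splits)
  qed
  have xineq: "F (x (Suc j)) + mu/2 * (norm (x (Suc j) - nu j))^2 \<le> F u + mu/2 * (norm (u - nu j))^2"
    if "u \<in> Xset blk w" "\<forall>k. 0 < blocknorm blk u k" for j u
    using xmin[OF that(1), of j] fobj_eq[OF that] fobj_eq[OF xin pos, of "Suc j"] by simp
  have yineq: "g (y (Suc j)) + rho/2 * (norm (y (Suc j) - R *v x (Suc j) + (1/rho) *\<^sub>R z j))^2
      \<le> g v + rho/2 * (norm (v - R *v x (Suc j) + (1/rho) *\<^sub>R z j))^2" if "v \<in> Yset c" for j v
    using ystep that unfolding is_argmin_on_def g_def by blast
  have wz: "wv (Suc j) = (1/rho) *\<^sub>R (z (Suc j) - z j)" for j
    using zstep rho by (simp add: wv_def)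
  have dzs: "summable (\<lambda>j. (norm (z (Suc j) - z j))^2)"
    using zsum summable_Suc_iff[where f="\<lambda>j. (norm (z (Suc j) - z j))^2"] by simp
  define S0 where "S0 = (\<Sum>j. (norm (z (Suc j) - z j))^2)"
  have S0le: "(\<Sum>j<n. (norm (z (Suc j) - z j))^2) \<le> S0" for n
    unfolding S0_def by (rule sum_le_suminf[OF dzs]) auto
  have dz0: "(\<lambda>j. z (Suc j) - z j) \<longlonglongrightarrow> 0"
    by (rule sq_to_zero, rule summable_LIMSEQ_zero[OF dzs])
  obtain Z where Z: "\<And>j. norm (z j) \<le> Z" using zbdd unfolding bounded_iff by auto
  have Z0: "0 \<le> Z" using Z[of 0] norm_ge_zero order_trans by blast
  define Cy where "Cy = (\<Sum>l\<in>UNIV. c$l)"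
  have ycomp: "0 \<le> y j $ l" "y j $ l \<le> c$l" for j l using yin[of j] by (auto simp: Yset_def)
  have ybnd: "norm (y j) \<le> Cy" for j
  proof -
    have "norm (y j) \<le> (\<Sum>l\<in>UNIV. \<bar>y j $ l\<bar>)" by (rule norm_le_l1_cart)
    also have "\<dots> \<le> Cy" unfolding Cy_def by (rule sum_mono) (use ycomp in auto)
    finally show ?thesis .
  qed
  define Wb where "Wb = max (norm (wv 0)) (2 * Z / rho)"
  have wbnd: "norm (wv j) \<le> Wb" for j
  proof (cases j)
    case 0 then show ?thesis by (simp add: Wb_def)
  next
    case (Suc j')
    have "norm (wv j) = norm (z (Suc j') - z j') / rho" using rho by (simp add: Suc wz)
    also have "\<dots> \<le> (Z + Z) / rho"
      using rho norm_triangle_ineq4[of "z (Suc j')" "z j'"] Z[of "Suc j'"] Z[of j']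
      by (intro divide_right_mono) auto
    finally show ?thesis by (simp add: Wb_def)
  qed
  define Bx where "Bx = Cy + Wb"
  have xbnd: "x j $ i \<le> Bx" for j i
  proof -
    obtain l where l: "R$l$i \<noteq> 0" using Rcol by blast
    hence Rl1: "R$l$i = 1" using R01 by blast
    have Rnn: "0 \<le> R$l$i'" for i' using R01 by (metis order_refl zero_le_one)
    have "x j $ i = R$l$i * x j $ i" by (simp add: Rl1)
    also have "\<dots> \<le> (\<Sum>i'\<in>UNIV. R$l$i' * x j $ i')"
      by (rule member_le_sum[where f="\<lambda>i'. R$l$i' * x j $ i'"]) (use Rnn xnn in auto)
    also have "\<dots> = (R *v x j) $ l" by (simp add: matrix_vector_mult_def)
    also have "\<dots> \<le> norm (R *v x j)" using component_le_norm_cart[of "R *v x j" l] by simp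
    also have "R *v x j = y j - wv j" by (simp add: wv_def)
    also have "norm (y j - wv j) \<le> Cy + Wb"
      using norm_triangle_ineq4[of "y j" "wv j"] ybnd[of j] wbnd[of j] by simp
    finally show ?thesis by (simp add: Bx_def)
  qed
  have bdd_x: "bounded (range x)"
    unfolding bounded_iff
  proof (intro exI[of _ "real CARD('p) * Bx"] ballI)
    fix v assume "v \<in> range x"
    then obtain j where v: "v = x j" by auto
    have "norm v \<le> (\<Sum>i\<in>UNIV. \<bar>v $ i\<bar>)" by (rule norm_le_l1_cart)
    also have "\<dots> \<le> (\<Sum>i\<in>(UNIV::'p set). Bx)" using v xnn xbnd by (intro sum_mono) (simp add: abs_of_nonneg)
    finally show "norm v \<le> real CARD('p) * Bx" by simp
  qed
  have bdd_y: "bounded (range y)" unfolding bounded_iff using ybnd by auto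
  have BND: "bounded (range (\<lambda>j. (x j, y j)))"
    by (rule bounded_subset[OF bounded_Times[OF bdd_x bdd_y]]) auto
  define Bn where "Bn = real CARD('p) * Bx"
  have bnle: "blocknorm blk (x j) k \<le> Bn" for j k
  proof -
    have "blocknorm blk (x j) k \<le> (\<Sum>i\<in>UNIV. \<bar>x j $ i\<bar>)"
      unfolding blocknorm_def by (rule sum_mono2) auto
    also have "\<dots> \<le> (\<Sum>i\<in>(UNIV::'p set). Bx)" using xnn xbnd by (intro sum_mono) (simp add: abs_of_nonneg)
    finally show ?thesis by (simp add: Bn_def)
  qed
  have Bnpos: "0 < Bn" using pos[of 0] bnle[of 0] by (meson less_le_trans)
  define m0 where "m0 = - beta * ln Bn"
  have termlow: "m0 \<le> - Uk beta (s k) (blocknorm blk (x j) k)" for j k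
  proof -
    let ?u = "blocknorm blk (x j) k"
    have u: "0 < ?u" "?u \<le> Bn" using pos bnle by auto
    have "ln ?u \<le> ln Bn" using u by simp
    hence "- beta * ln Bn \<le> - beta * ln ?u" using beta by simp
    moreover have "0 < s k / ?u" using spos u by simp
    ultimately show ?thesis unfolding m0_def Uk_def by simp
  qed
  have Flow: "real CARD('k) * m0 \<le> F (x j)" for j
  proof -
    have "(\<Sum>k\<in>(UNIV::'k set). m0) \<le> (\<Sum>k\<in>UNIV. - Uk beta (s k) (blocknorm blk (x j) k))"
      by (rule sum_mono) (rule termlow)
    thus ?thesis by (simp add: F_def sum_negf)
  qed
  have glow: "0 \<le> g (y j)" for j
  proof -
    have "0 \<le> y j $ undefined / c $ undefined" by (intro divide_nonneg_pos ycomp(1) cl)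
    also have "\<dots> \<le> Mx c (y j)" by (rule Mx_ge)
    finally show ?thesis using alpha by (simp add: g_def gobj_Mx)
  qed
  have innlow: "- (Z * Wb) \<le> inner (z j) (wv j)" for j
  proof -
    have "\<bar>inner (z j) (wv j)\<bar> \<le> norm (z j) * norm (wv j)" by (rule Cauchy_Schwarz_ineq2)
    also have "\<dots> \<le> Z * Wb" using Z wbnd Z0 by (intro mult_mono) auto
    finally show ?thesis by linarith
  qed
  have rq: "0 \<le> rho/2 * (norm (wv j))^2" for j using rho by simp
  have Qlow: "real CARD('k) * m0 - Z * Wb \<le> Q j" for j
    using Flow[of j] glow[of j] innlow[of j] rq[of j] unfolding Q_def by linarith
  have Qstep: "Q (Suc j) \<le> Q j - cc * (norm (x (Suc j) - x j))^2 + (norm (z (Suc j) - z j))^2 / rho" for j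
  proof -
    have xi: "F (x (Suc j)) + mu/2 * (norm (x (Suc j) - nu j))^2 \<le> F (x j) + mu/2 * (norm (x j - nu j))^2"
      by (rule xineq[OF xin pos])
    have "F (x (Suc j)) + g (y (Suc j)) + inner (z (Suc j)) (y (Suc j) - R *v x (Suc j)) + rho/2 * (norm (y (Suc j) - R *v x (Suc j)))^2
     \<le> F (x j) + g (y j) + inner (z j) (y j - R *v x j) + rho/2 * (norm (y j - R *v x j))^2
        - (mu - rho * N^2)/2 * (norm (x (Suc j) - x j))^2 + (norm (z (Suc j) - z j))^2 / rho"
      by (rule descent_alg[OF rho mupos Nb xi[unfolded nu_def] yineq[OF yin] zstep[rule_format]])
    thus ?thesis unfolding Q_def wv_def cc_def .
  qed
  have Qtel: "Q n + cc * (\<Sum>j<n. (norm (x (Suc j) - x j))^2) \<le> Q 0 + (\<Sum>j<n. (norm (z (Suc j) - z j))^2) / rho" for n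
  proof (induction n)
    case 0 then show ?case by simp
  next
    case (Suc n)
    show ?case using Suc.IH Qstep[of n] by (simp add: add_divide_distrib algebra_simps)
  qed
  have Qup: "Q n \<le> Q 0 + S0 / rho" for n
  proof -
    have "0 \<le> cc * (\<Sum>j<n. (norm (x (Suc j) - x j))^2)" using cc by (simp add: sum_nonneg)
    moreover have "(\<Sum>j<n. (norm (z (Suc j) - z j))^2) / rho \<le> S0 / rho"
      using S0le rho by (simp add: divide_right_mono)
    ultimately show ?thesis using Qtel[of n] by linarith
  qed
  have dsum: "summable (\<lambda>j. (norm (x (Suc j) - x j))^2)"
  proof (rule summableI_nonneg_bounded)
    fix n
    have "cc * (\<Sum>j<n. (norm (x (Suc j) - x j))^2) \<le> Q 0 + S0 / rho - (real CARD('k) * m0 - Z * Wb)"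
    proof -
      have "(\<Sum>j<n. (norm (z (Suc j) - z j))^2) / rho \<le> S0 / rho" using S0le[of n] rho by (simp add: divide_right_mono)
      thus ?thesis using Qtel[of n] Qlow[of n] by linarith
    qed
    thus "(\<Sum>j<n. (norm (x (Suc j) - x j))^2) \<le> (Q 0 + S0 / rho - (real CARD('k) * m0 - Z * Wb)) / cc"
      using cc by (simp add: pos_le_divide_eq mult.commute)
  qed simp
  have dx0: "(\<lambda>j. x (Suc j) - x j) \<longlonglongrightarrow> 0"
    by (rule sq_to_zero, rule summable_LIMSEQ_zero[OF dsum])
  have wvS: "(\<lambda>j. wv (Suc j)) \<longlonglongrightarrow> 0"
  proof -
    have "(\<lambda>j. (1/rho) *\<^sub>R (z (Suc j) - z j)) \<longlonglongrightarrow> (1/rho) *\<^sub>R 0"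
      by (intro tendsto_scaleR tendsto_const dz0)
    thus ?thesis by (simp add: wz)
  qed
  define Fmax where "Fmax = Q 0 + S0 / rho + Z * Wb"
  have Fup: "F (x j) \<le> Fmax" for j
    using Qup[of j] glow[of j] innlow[of j] rq[of j] unfolding Q_def Fmax_def by linarith
  define G0 where "G0 = Fmax - real CARD('k) * m0 + m0 + beta * ln Bn"
  have bnlow: "0 < G0 \<and> s k / G0 \<le> blocknorm blk (x j) k" for j k
  proof -
    let ?u = "blocknorm blk (x j) k"
    have u: "0 < ?u" "?u \<le> Bn" using pos bnle by auto
    have "- Uk beta (s k) ?u - m0 \<le> (\<Sum>k'\<in>UNIV. - Uk beta (s k') (blocknorm blk (x j) k') - m0)"
      by (rule member_le_sum[where f="\<lambda>k'. - Uk beta (s k') (blocknorm blk (x j) k') - m0"]) (use termlow in auto)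
    also have "\<dots> = F (x j) - real CARD('k) * m0" by (simp add: F_def sum_subtractf sum_negf)
    finally have t1: "- Uk beta (s k) ?u - m0 \<le> F (x j) - real CARD('k) * m0" .
    have "ln ?u \<le> ln Bn" using u by simp
    hence "beta * ln ?u \<le> beta * ln Bn" using beta by simp
    hence sle: "s k / ?u \<le> G0" using t1 Fup[of j] unfolding G0_def Uk_def by linarith
    have sp: "0 < s k / ?u" using spos u by simp
    hence G0p: "0 < G0" using sle by linarith
    have "s k \<le> G0 * ?u" using sle u by (simp add: divide_le_eq mult.commute)
    thus ?thesis using G0p by (simp add: divide_le_eq mult.commute)
  qed
  show ?thesis
  proof (rule conjI[OF BND], intro allI impI)
    fix xb yb
    assume "\<exists>r. strict_mono r \<and> (\<lambda>n. (x (r n), y (r n))) \<longlonglongrightarrow> (xb, yb)"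
    then obtain r where r: "strict_mono r" and rl: "(\<lambda>n. (x (r n), y (r n))) \<longlonglongrightarrow> (xb, yb)" by blast
    have xr: "(\<lambda>n. x (r n)) \<longlonglongrightarrow> xb" using tendsto_fst[OF rl] by simp
    have yr: "(\<lambda>n. y (r n)) \<longlonglongrightarrow> yb" using tendsto_snd[OF rl] by simp
    define p where "p n = r (Suc n) - 1" for n
    have rge: "Suc n \<le> r (Suc n)" for n using seq_suble[OF r, of "Suc n"] .
    have pS: "Suc (p n) = r (Suc n)" for n using rge[of n] by (simp add: p_def)
    have pmono: "strict_mono p"
      unfolding strict_mono_Suc_iff
    proof
      fix n
      have "r (Suc n) < r (Suc (Suc n))" using r by (simp add: strict_mono_def)
      thus "p n < p (Suc n)" using pS[of n] pS[of "Suc n"] by simp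
    qed
    have xp: "(\<lambda>n. x (Suc (p n))) \<longlonglongrightarrow> xb" using LIMSEQ_Suc[OF xr] by (simp add: pS)
    have yp: "(\<lambda>n. y (Suc (p n))) \<longlonglongrightarrow> yb" using LIMSEQ_Suc[OF yr] by (simp add: pS)
    have zpb: "bounded (range (\<lambda>n. z (p n)))" by (rule bounded_subset[OF zbdd]) auto
    obtain zh q where q: "strict_mono q" and zq: "((\<lambda>n. z (p n)) \<circ> q) \<longlonglongrightarrow> zh"
      using bounded_imp_convergent_subsequence[OF zpb] by blast
    define P where "P = p \<circ> q"
    have Pm: "strict_mono P" unfolding P_def by (rule strict_mono_o[OF pmono q])
    have xP: "(\<lambda>n. x (Suc (P n))) \<longlonglongrightarrow> xb" using LIMSEQ_subseq_LIMSEQ[OF xp q] by (simp add: P_def o_def)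
    have yP: "(\<lambda>n. y (Suc (P n))) \<longlonglongrightarrow> yb" using LIMSEQ_subseq_LIMSEQ[OF yp q] by (simp add: P_def o_def)
    have zP: "(\<lambda>n. z (P n)) \<longlonglongrightarrow> zh" using zq by (simp add: P_def o_def)
    have xP0: "(\<lambda>n. x (P n)) \<longlonglongrightarrow> xb"
    proof -
      have "(\<lambda>n. x (Suc (P n)) - x (P n)) \<longlonglongrightarrow> 0" using LIMSEQ_subseq_LIMSEQ[OF dx0 Pm] by (simp add: o_def)
      from tendsto_diff[OF xP this] show ?thesis by simp
    qed
    have wv0: "wv \<longlonglongrightarrow> 0" using wvS filterlim_sequentially_Suc[of wv] by simp
    have wP: "(\<lambda>n. wv (P n)) \<longlonglongrightarrow> 0" using LIMSEQ_subseq_LIMSEQ[OF wv0 Pm] by (simp add: o_def)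
    have wSP: "(\<lambda>n. wv (Suc (P n))) \<longlonglongrightarrow> 0" using LIMSEQ_subseq_LIMSEQ[OF wvS Pm] by (simp add: o_def)
    have Rcont: "(\<lambda>n. A *v f n) \<longlonglongrightarrow> A *v l" if "f \<longlonglongrightarrow> l" for f l and A :: "real^'a::finite^'b::finite"
      using bounded_linear.tendsto[OF matrix_vector_mul_bounded_linear that] .
    have ybR: "yb = R *v xb"
    proof -
      have "(\<lambda>n. wv (Suc (P n))) \<longlonglongrightarrow> yb - R *v xb" unfolding wv_def by (intro tendsto_diff yP Rcont xP)
      with wSP LIMSEQ_unique have "yb - R *v xb = 0" by metis
      thus ?thesis by simp
    qed
    define nb where "nb = xb + (1/mu) *\<^sub>R (transpose R *v zh)"
    have nuP: "(\<lambda>n. nu (P n)) \<longlonglongrightarrow> nb"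
    proof -
      have "(\<lambda>n. x (P n) + (rho / mu) *\<^sub>R (transpose R *v (wv (P n) + (1 / rho) *\<^sub>R z (P n))))
          \<longlonglongrightarrow> xb + (rho / mu) *\<^sub>R (transpose R *v (0 + (1 / rho) *\<^sub>R zh))"
        by (intro tendsto_add xP0 tendsto_scaleR tendsto_const Rcont wP zP)
      moreover have "xb + (rho / mu) *\<^sub>R (transpose R *v (0 + (1 / rho) *\<^sub>R zh)) = nb"
        using rho by (simp add: nb_def matrix_vector_mult_scaleR)
      ultimately show ?thesis by (simp add: nu_def wv_def)
    qed
    have xbnn: "0 \<le> xb $ i" for i
      by (rule LIMSEQ_le_const[OF tendsto_vec_nth[OF xr]]) (use xnn in auto)
    have xbX: "xb \<in> Xset blk w"
    proof -
      have "\<forall>\<^sub>F n in sequentially. \<forall>i. xb$i \<noteq> 0 \<longrightarrow> x (r n) $ i \<noteq> 0"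
      proof (rule eventually_all_finite)
        fix i
        show "\<forall>\<^sub>F n in sequentially. xb$i \<noteq> 0 \<longrightarrow> x (r n) $ i \<noteq> 0"
        proof (cases "xb$i = 0")
          case True thus ?thesis by simp
        next
          case False
          have "\<forall>\<^sub>F n in sequentially. x (r n) $ i \<noteq> 0"
            by (rule tendsto_imp_eventually_ne[OF tendsto_vec_nth[OF xr] False])
          thus ?thesis by (rule eventually_mono) simp
        qed
      qed
      then obtain N where N: "\<And>i. xb$i \<noteq> 0 \<Longrightarrow> x (r N) $ i \<noteq> 0"
        unfolding eventually_sequentially by blast
      have "blockl0 blk xb k \<le> w k" for k
      proof -
        have "blockl0 blk xb k \<le> blockl0 blk (x (r N)) k"
          unfolding blockl0_def by (rule card_mono) (use N in auto)
        also have "\<dots> \<le> w k" using xin[of "r N"] by (simp add: Xset_def)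
        finally show ?thesis .
      qed
      thus ?thesis using xbnn by (simp add: Xset_def)
    qed
    have ybY: "yb \<in> Yset c"
    proof -
      have "0 \<le> yb $ l \<and> yb $ l \<le> c $ l" for l
      proof
        show "0 \<le> yb $ l" by (rule LIMSEQ_le_const[OF tendsto_vec_nth[OF yr]]) (use ycomp in auto)
        show "yb $ l \<le> c $ l" by (rule LIMSEQ_le_const2[OF tendsto_vec_nth[OF yr]]) (use ycomp in auto)
      qed
      thus ?thesis by (simp add: Yset_def)
    qed
    have bnxb: "\<forall>k. 0 < blocknorm blk xb k"
    proof
      fix k
      have bn: "(\<lambda>n. blocknorm blk (x (r n)) k) \<longlonglongrightarrow> blocknorm blk xb k"
        unfolding blocknorm_def by (rule tendsto_sum, rule tendsto_rabs, rule tendsto_vec_nth, rule xr)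
      have "s k / G0 \<le> blocknorm blk xb k"
        by (rule LIMSEQ_le_const[OF bn]) (use bnlow in auto)
      moreover have "0 < G0" using bnlow by blast
      hence "0 < s k / G0" using spos by simp
      ultimately show "0 < blocknorm blk xb k" by linarith
    qed
    have optx: "\<forall>u\<in>Xset blk w. (\<forall>k. blocknorm blk u k > 0) \<longrightarrow>
       - (\<Sum>k\<in>UNIV. Uk beta (s k) (blocknorm blk xb k)) + mu/2 * (norm (xb - (xb + (1/mu) *\<^sub>R (transpose R *v zh))))^2
       \<le> - (\<Sum>k\<in>UNIV. Uk beta (s k) (blocknorm blk u k)) + mu/2 * (norm (u - (xb + (1/mu) *\<^sub>R (transpose R *v zh))))^2"
    proof (intro ballI impI)
      fix u assume uX: "u \<in> Xset blk w" and up: "\<forall>k. blocknorm blk u k > 0"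
      have L: "(\<lambda>n. F (x (Suc (P n))) + mu/2 * (norm (x (Suc (P n)) - nu (P n)))^2) \<longlonglongrightarrow> F xb + mu/2 * (norm (xb - nb))^2"
        unfolding F_def by (intro tendsto_add F_cont[OF xP bnxb] tendsto_mult tendsto_const tendsto_power tendsto_norm tendsto_diff xP nuP)
      have Rl: "(\<lambda>n. F u + mu/2 * (norm (u - nu (P n)))^2) \<longlonglongrightarrow> F u + mu/2 * (norm (u - nb))^2"
        by (intro tendsto_add tendsto_mult tendsto_const tendsto_power tendsto_norm tendsto_diff nuP)
      have "F xb + mu/2 * (norm (xb - nb))^2 \<le> F u + mu/2 * (norm (u - nb))^2"
        by (rule LIMSEQ_le[OF L Rl]) (use xineq[OF uX up] in auto)
      thus "- (\<Sum>k\<in>UNIV. Uk beta (s k) (blocknorm blk xb k)) + mu/2 * (norm (xb - (xb + (1/mu) *\<^sub>R (transpose R *v zh))))^2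
       \<le> - (\<Sum>k\<in>UNIV. Uk beta (s k) (blocknorm blk u k)) + mu/2 * (norm (u - (xb + (1/mu) *\<^sub>R (transpose R *v zh))))^2"
        by (simp add: F_def nb_def)
    qed
    have vfr: "transpose R *v zh - fgrad blk beta s xb \<in> frechet_subdiff (indic (Xset blk w)) xb"
      by (rule x_kkt[OF mupos xbX bnxb optx])
    have opty: "\<forall>v\<in>Yset c. gobj alpha c yb + rho/2 * (norm ((1/rho) *\<^sub>R zh))^2
                 \<le> gobj alpha c v + rho/2 * (norm (v - yb + (1/rho) *\<^sub>R zh))^2"
    proof
      fix v assume vY: "v \<in> Yset c"
      have L: "(\<lambda>n. g (y (Suc (P n))) + rho/2 * (norm (y (Suc (P n)) - R *v x (Suc (P n)) + (1/rho) *\<^sub>R z (P n)))^2)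
          \<longlonglongrightarrow> g yb + rho/2 * (norm (yb - R *v xb + (1/rho) *\<^sub>R zh))^2"
        unfolding g_def by (intro tendsto_add g_cont[OF cpos yP] tendsto_mult tendsto_const tendsto_power tendsto_norm tendsto_diff yP Rcont xP tendsto_scaleR zP)
      have Rl: "(\<lambda>n. g v + rho/2 * (norm (v - R *v x (Suc (P n)) + (1/rho) *\<^sub>R z (P n)))^2)
          \<longlonglongrightarrow> g v + rho/2 * (norm (v - R *v xb + (1/rho) *\<^sub>R zh))^2"
        by (intro tendsto_add tendsto_mult tendsto_const tendsto_power tendsto_norm tendsto_diff Rcont xP tendsto_scaleR zP)
      have "g yb + rho/2 * (norm (yb - R *v xb + (1/rho) *\<^sub>R zh))^2 \<le> g v + rho/2 * (norm (v - R *v xb + (1/rho) *\<^sub>R zh))^2"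
        by (rule LIMSEQ_le[OF L Rl]) (use yineq[OF vY] in auto)
      thus "gobj alpha c yb + rho/2 * (norm ((1/rho) *\<^sub>R zh))^2 \<le> gobj alpha c v + rho/2 * (norm (v - yb + (1/rho) *\<^sub>R zh))^2"
        by (simp add: g_def ybR[symmetric])
    qed
    obtain a b where ab: "a \<in> frechet_subdiff (\<lambda>v. ereal (gobj alpha c v)) yb"
        "b \<in> frechet_subdiff (indic (Yset c)) yb" "a + b + zh = 0"
      using y_kkt[OF cpos alpha ybY y_lin[OF rho alpha ybY opty]] by blast
    show "(\<forall>k. blocknorm blk xb k > 0) \<and>
       (\<exists>zh :: real^'l.
          (\<exists>v \<in> limiting_subdiff (indic (Xset blk w)) xb.
              fgrad blk beta s xb + v - transpose R *v zh = 0) \<and>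
          (\<exists>a \<in> limiting_subdiff (\<lambda>v. ereal (gobj alpha c v)) yb.
             \<exists>b \<in> limiting_subdiff (indic (Yset c)) yb. a + b + zh = 0) \<and>
          yb = R *v xb)"
    proof -
      have A: "\<exists>v \<in> limiting_subdiff (indic (Xset blk w)) xb. fgrad blk beta s xb + v - transpose R *v zh = 0"
        by (rule bexI[OF _ limiting_of_frechet[OF vfr]]) simp
      have B: "\<exists>a \<in> limiting_subdiff (\<lambda>v. ereal (gobj alpha c v)) yb.
             \<exists>b \<in> limiting_subdiff (indic (Yset c)) yb. a + b + zh = 0"
        using ab limiting_of_frechet by blast
      show ?thesis using bnxb A B ybR by blast
    qed
  qed
qed


end
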